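(* Let $I$ be an ESP instance, let $0<\varepsilon\le1$ and $\beta\ge1$, let $\sigma^*$ be an optimal feasible pattern for $I$ and $\sigma_\beta$ a feasible pattern with $L(\sigma_\beta)\le\beta L(\sigma^* )$. Set $\gamma=3/\varepsilon$, $a=\beta\gamma/\varepsilon$, and let $b$ be chosen uniformly at random in $[0,a]$. Define $t_i=e^{(i-2)a+b}$ for $i=1,2,\dots$, let $q$ be the smallest integer such that $L_v(\sigma_\beta)<t_{q+1}$ for all vertices $v$ visited by $\sigma_\beta$, and for $i\in[q]$ let $V_i=\{v \text{ visited by }\sigma_\beta: t_i\le L_v(\sigma_\beta)<t_{i+1}\}$ and $V_i^*=V_i\cap V^*$. For $i\in[q]$ let $I_i$ be the instance obtained from $I$ by setting the weights of all vertices outside $V_i$ to $0$, with objective $C'_i(\sigma)=\sum_{v\in V_i^*}w_v(\gamma t_i+L_v(\sigma))$ over patterns $\sigma$ feasible for $I_i$, and let $\sigma_i^*$ minimize $C'_i$. Then $$\mathbb{E}\Bigl[\sum_{i\in[q]}C'_i(\sigma_i^* )\Bigr]\le(1+\varepsilon)\,L(\sigma^* ),$$ where the expectation is over $b$.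
   Context: ESP: connected undirected graph $G=(V,E)$, root $r$, nonnegative edge lengths $\ell_e$, nonnegative integer weights $w_v$, $V^*=\{v:w_v>0\}$. An expanding search pattern is a sequence $\sigma=(e_1,\dots,e_m)$ of edges with $r\in e_1$ such that $\{e_1,\dots,e_i\}$ is a tree for every $i$; a vertex is visited by $\sigma$ if it is $r$ or an endpoint of some $e_i$; $\sigma$ is feasible (for an instance) if it visits all positive-weight vertices of that instance. For a visited $v\ne r$, $k_v=\min\{i:v\in e_i\}$, $k_r=0$, latency $L_v(\sigma)=\sum_{i\le k_v}\ell_{e_i}$; total latency $L(\sigma)=\sum_{v\in V^*}w_vL_v(\sigma)$. *)

theory Defs
  imports "HOL-Analysis.Analysis"
begin

(* Undirected simple graphs: an edge is a 2-element vertex set. *)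

definition adj :: "'v set set \<Rightarrow> 'v \<Rightarrow> 'v \<Rightarrow> bool" where
  "adj F x y \<longleftrightarrow> x \<noteq> y \<and> {x, y} \<in> F"

(* the edge set F (on vertex set \<Union>F) is a tree: connected and acyclic;
   acyclic = no edge lies on a cycle, i.e. removing an edge disconnects its endpoints *)
definition tree_edges :: "'v set set \<Rightarrow> bool" where
  "tree_edges F \<longleftrightarrow> finite F \<and> (\<forall>e\<in>F. card e = 2)
     \<and> (\<forall>u\<in>\<Union>F. \<forall>v\<in>\<Union>F. (adj F)\<^sup>*\<^sup>* u v)
     \<and> (\<forall>e\<in>F. \<forall>x y. e = {x, y} \<longrightarrow> \<not> (adj (F - {e}))\<^sup>*\<^sup>* x y)"

definition esp_instance :: "'v set \<Rightarrow> 'v set set \<Rightarrow> 'v \<Rightarrow> ('v set \<Rightarrow> real) \<Rightarrow> ('v \<Rightarrow> nat) \<Rightarrow> bool" where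
  "esp_instance V E r l w \<longleftrightarrow> finite V \<and> r \<in> V
     \<and> E \<subseteq> {{u, v} | u v. u \<in> V \<and> v \<in> V \<and> u \<noteq> v}
     \<and> (\<forall>v\<in>V. (adj E)\<^sup>*\<^sup>* r v)
     \<and> (\<forall>e\<in>E. 0 \<le> l e)
     \<and> (\<forall>v. 0 < w v \<longrightarrow> v \<in> V)"

definition esp_pattern :: "'v set set \<Rightarrow> 'v \<Rightarrow> 'v set list \<Rightarrow> bool" where
  "esp_pattern E r \<sigma> \<longleftrightarrow> set \<sigma> \<subseteq> E \<and> distinct \<sigma>
     \<and> (\<sigma> \<noteq> [] \<longrightarrow> r \<in> hd \<sigma>)
     \<and> (\<forall>i\<in>{1..length \<sigma>}. tree_edges (set (take i \<sigma>)))"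

definition visited :: "'v \<Rightarrow> 'v set list \<Rightarrow> 'v set" where
  "visited r \<sigma> = insert r (\<Union>(set \<sigma>))"

(* latency; indices are 0-based here: edge e_{j+1} is \<sigma> ! j *)
definition latency :: "('v set \<Rightarrow> real) \<Rightarrow> 'v \<Rightarrow> 'v set list \<Rightarrow> 'v \<Rightarrow> real" where
  "latency l r \<sigma> v = (if v = r then 0
     else (\<Sum>j\<le>(LEAST j. j < length \<sigma> \<and> v \<in> \<sigma> ! j). l (\<sigma> ! j)))"

definition feasible :: "'v set set \<Rightarrow> 'v \<Rightarrow> ('v \<Rightarrow> nat) \<Rightarrow> 'v set list \<Rightarrow> bool" where
  "feasible E r w \<sigma> \<longleftrightarrow> esp_pattern E r \<sigma> \<and> {v. 0 < w v} \<subseteq> visited r \<sigma>"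

definition total_latency :: "('v set \<Rightarrow> real) \<Rightarrow> 'v \<Rightarrow> ('v \<Rightarrow> nat) \<Rightarrow> 'v set list \<Rightarrow> real" where
  "total_latency l r w \<sigma> = (\<Sum>v\<in>{v. 0 < w v}. real (w v) * latency l r \<sigma> v)"

definition esp_gamma :: "real \<Rightarrow> real" where
  "esp_gamma \<epsilon> = 3 / \<epsilon>"

definition esp_a :: "real \<Rightarrow> real \<Rightarrow> real" where
  "esp_a \<epsilon> \<beta> = \<beta> * esp_gamma \<epsilon> / \<epsilon>"

definition esp_t :: "real \<Rightarrow> real \<Rightarrow> real \<Rightarrow> nat \<Rightarrow> real" where
  "esp_t \<epsilon> \<beta> b i = exp ((real i - 2) * esp_a \<epsilon> \<beta> + b)"

definition esp_q :: "('v set \<Rightarrow> real) \<Rightarrow> 'v \<Rightarrow> 'v set list \<Rightarrow> real \<Rightarrow> real \<Rightarrow> real \<Rightarrow> nat" where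
  "esp_q l r \<sigma>\<beta> \<epsilon> \<beta> b = (LEAST q::nat. \<forall>v\<in>visited r \<sigma>\<beta>. latency l r \<sigma>\<beta> v < esp_t \<epsilon> \<beta> b (q + 1))"

definition esp_V :: "('v set \<Rightarrow> real) \<Rightarrow> 'v \<Rightarrow> 'v set list \<Rightarrow> real \<Rightarrow> real \<Rightarrow> real \<Rightarrow> nat \<Rightarrow> 'v set" where
  "esp_V l r \<sigma>\<beta> \<epsilon> \<beta> b i = {v \<in> visited r \<sigma>\<beta>. esp_t \<epsilon> \<beta> b i \<le> latency l r \<sigma>\<beta> v \<and> latency l r \<sigma>\<beta> v < esp_t \<epsilon> \<beta> b (i + 1)}"

definition esp_w :: "('v set \<Rightarrow> real) \<Rightarrow> 'v \<Rightarrow> ('v \<Rightarrow> nat) \<Rightarrow> 'v set list \<Rightarrow> real \<Rightarrow> real \<Rightarrow> real \<Rightarrow> nat \<Rightarrow> 'v \<Rightarrow> nat" where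
  "esp_w l r w \<sigma>\<beta> \<epsilon> \<beta> b i v = (if v \<in> esp_V l r \<sigma>\<beta> \<epsilon> \<beta> b i then w v else 0)"

(* C'_i(sigma) = sum over V_i^* = V_i \<inter> V^* of w_v (gamma t_i + L_v(sigma)) *)
definition esp_C :: "('v set \<Rightarrow> real) \<Rightarrow> 'v \<Rightarrow> ('v \<Rightarrow> nat) \<Rightarrow> 'v set list \<Rightarrow> real \<Rightarrow> real \<Rightarrow> real \<Rightarrow> nat \<Rightarrow> 'v set list \<Rightarrow> real" where
  "esp_C l r w \<sigma>\<beta> \<epsilon> \<beta> b i \<sigma> =
     (\<Sum>v\<in>esp_V l r \<sigma>\<beta> \<epsilon> \<beta> b i \<inter> {v. 0 < w v}.
        real (w v) * (esp_gamma \<epsilon> * esp_t \<epsilon> \<beta> b i + latency l r \<sigma> v))"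

end

theory Submission imports Defs begin

lemma latency_nonneg:
  assumes "set \<sigma> \<subseteq> E" "\<forall>e\<in>E. 0 \<le> l e" "v \<in> visited r \<sigma>"
  shows "0 \<le> latency l r \<sigma> v"
proof (cases "v = r")
  case True then show ?thesis by (simp add: latency_def)
next
  case False
  then obtain j where j: "j < length \<sigma>" "v \<in> \<sigma> ! j"
    using assms(3) by (auto simp: visited_def in_set_conv_nth)
  let ?k = "LEAST j. j < length \<sigma> \<and> v \<in> \<sigma> ! j"
  have "?k \<le> j" using j by (intro Least_le) auto
  then have "\<forall>i\<le>?k. l (\<sigma> ! i) \<ge> 0" using j assms(1,2) by (auto simp: subset_iff)
  then show ?thesis using False by (auto simp add: latency_def intro!: sum_nonneg)
qed

lemma sum_single_bound:
  fixes h :: "nat \<Rightarrow> real"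
  assumes "finite A" "\<And>i j. i\<in>A \<Longrightarrow> j\<in>A \<Longrightarrow> P i \<Longrightarrow> P j \<Longrightarrow> i = j"
    "\<And>i. i\<in>A \<Longrightarrow> P i \<Longrightarrow> h i \<le> H" "0 \<le> H"
  shows "(\<Sum>i\<in>A. if P i then h i else 0) \<le> H"
proof (cases "\<exists>i\<in>A. P i")
  case True
  then obtain i0 where i0: "i0 \<in> A" "P i0" by blast
  have "(\<Sum>i\<in>A. if P i then h i else 0) = (\<Sum>i\<in>A. if i = i0 then h i else 0)"
    using assms(2) i0 by (intro sum.cong) auto
  also have "\<dots> = h i0" using i0 assms(1) by simp
  finally show ?thesis using assms(3) i0 by simp
next
  case False
  then have "(\<Sum>i\<in>A. if P i then h i else 0) = 0" by (intro sum.neutral) auto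
  then show ?thesis using assms(4) by simp
qed

lemma psi_integral:
  fixes a c L :: real
  assumes "0 < a" "0 \<le> c" "c < a"
  shows "((\<lambda>b. L * exp (b - c - (if b \<le> c then 0 else a))) has_integral L * (1 - exp (-a))) {0..a}"
proof -
  have d: "((\<lambda>b. L * exp (b - k)) has_real_derivative L * exp (b - k)) (at b within S)" for b k S
    by (auto intro!: derivative_eq_intros)
  have 1: "((\<lambda>b. L * exp (b - c)) has_integral (L * exp (c - c) - L * exp (0 - c))) {0..c}"
    using assms by (intro fundamental_theorem_of_calculus) (auto intro: d[THEN DERIV_subset] simp: has_real_derivative_iff_has_vector_derivative[symmetric] d)
  have 2: "((\<lambda>b. L * exp (b - (c + a))) has_integral (L * exp (a - (c + a)) - L * exp (c - (c + a)))) {c..a}"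
    using assms by (intro fundamental_theorem_of_calculus) (auto simp: has_real_derivative_iff_has_vector_derivative[symmetric] d)
  have i1: "((\<lambda>b. L * exp (b - c - (if b \<le> c then 0 else a))) has_integral (L * exp (c - c) - L * exp (0 - c))) {0..c}"
    using 1 by (rule has_integral_eq[rotated]) auto
  have i2: "((\<lambda>b. L * exp (b - c - (if b \<le> c then 0 else a))) has_integral (L * exp (a - (c + a)) - L * exp (c - (c + a)))) {c..a}"
    using 2 by (rule has_integral_spike_finite[where S="{c}", rotated 2]) (auto simp: algebra_simps)
  have "((\<lambda>b. L * exp (b - c - (if b \<le> c then 0 else a))) has_integral
     (L * exp (c - c) - L * exp (0 - c)) + (L * exp (a - (c + a)) - L * exp (c - (c + a)))) {0..a}"
    using assms by (intro has_integral_combine[OF _ _ i1 i2]) auto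
  moreover have "(L * exp (c - c) - L * exp (0 - c)) + (L * exp (a - (c + a)) - L * exp (c - (c + a))) = L * (1 - exp (-a))"
    by (simp add: algebra_simps)
  ultimately show ?thesis by simp
qed

theorem lemma9:
  fixes V :: "'v set" and E :: "'v set set" and r :: 'v
    and l :: "'v set \<Rightarrow> real" and w :: "'v \<Rightarrow> nat"
    and \<epsilon> \<beta> :: real and \<sigma>opt \<sigma>\<beta> :: "'v set list"
    and \<sigma>i :: "real \<Rightarrow> nat \<Rightarrow> 'v set list"
  assumes inst: "esp_instance V E r l w"
    and eps: "0 < \<epsilon>" "\<epsilon> \<le> 1" and beta: "1 \<le> \<beta>"
    and opt: "feasible E r w \<sigma>opt"
      "\<forall>\<sigma>. feasible E r w \<sigma> \<longrightarrow> total_latency l r w \<sigma>opt \<le> total_latency l r w \<sigma>"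
    and approx: "feasible E r w \<sigma>\<beta>"
      "total_latency l r w \<sigma>\<beta> \<le> \<beta> * total_latency l r w \<sigma>opt"
    and minimizers: "\<forall>b\<in>{0..esp_a \<epsilon> \<beta>}. \<forall>i\<in>{1..esp_q l r \<sigma>\<beta> \<epsilon> \<beta> b}.
        feasible E r (esp_w l r w \<sigma>\<beta> \<epsilon> \<beta> b i) (\<sigma>i b i)
      \<and> (\<forall>\<sigma>. feasible E r (esp_w l r w \<sigma>\<beta> \<epsilon> \<beta> b i) \<sigma> \<longrightarrow>
             esp_C l r w \<sigma>\<beta> \<epsilon> \<beta> b i (\<sigma>i b i) \<le> esp_C l r w \<sigma>\<beta> \<epsilon> \<beta> b i \<sigma>)"
  shows "(\<lambda>b. \<Sum>i\<in>{1..esp_q l r \<sigma>\<beta> \<epsilon> \<beta> b}. esp_C l r w \<sigma>\<beta> \<epsilon> \<beta> b i (\<sigma>i b i))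
           integrable_on {0..esp_a \<epsilon> \<beta>}
    \<and> integral {0..esp_a \<epsilon> \<beta>}
        (\<lambda>b. \<Sum>i\<in>{1..esp_q l r \<sigma>\<beta> \<epsilon> \<beta> b}. esp_C l r w \<sigma>\<beta> \<epsilon> \<beta> b i (\<sigma>i b i)) / esp_a \<epsilon> \<beta>
      \<le> (1 + \<epsilon>) * total_latency l r w \<sigma>opt"
proof -
  define a where "a = esp_a \<epsilon> \<beta>"
  define \<gamma> where "\<gamma> = esp_gamma \<epsilon>"
  define t where "t = esp_t \<epsilon> \<beta>"
  define Vs where "Vs = esp_V l r \<sigma>\<beta> \<epsilon> \<beta>"
  define q where "q = esp_q l r \<sigma>\<beta> \<epsilon> \<beta>"
  define vis where "vis = visited r \<sigma>\<beta>"
  define Vst where "Vst = {v. 0 < w v}"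
  define Lb where "Lb = latency l r \<sigma>\<beta>"
  define Lo where "Lo = latency l r \<sigma>opt"
  define f where "f = (\<lambda>b. \<Sum>i\<in>{1..q b}. esp_C l r w \<sigma>\<beta> \<epsilon> \<beta> b i (\<sigma>i b i))"
  have \<gamma>pos: "0 < \<gamma>" using eps by (simp add: \<gamma>_def esp_gamma_def)
  have apos: "0 < a" using eps beta \<gamma>pos by (simp add: a_def esp_a_def \<gamma>_def[symmetric])
  have t_def': "t b i = exp ((real i - 2) * a + b)" for b i by (simp add: t_def esp_t_def a_def)
  have tpos: "0 < t b i" for b i by (simp add: t_def')
  have tmono: "i \<le> j \<Longrightarrow> t b i \<le> t b j" for b i j using apos by (simp add: t_def' mult_right_mono)
  have Vs_def': "Vs b i = {v \<in> vis. t b i \<le> Lb v \<and> Lb v < t b (i+1)}" for b i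
    by (simp add: Vs_def esp_V_def vis_def t_def Lb_def)
  have q_def': "q b = (LEAST q. \<forall>v\<in>vis. Lb v < t b (q+1))" for b
    by (simp add: q_def esp_q_def vis_def Lb_def t_def)
  have finV: "finite V" and lnn: "\<forall>e\<in>E. 0 \<le> l e" and wV: "Vst \<subseteq> V" and rV: "r \<in> V"
    and EV: "E \<subseteq> {{u, v} | u v. u \<in> V \<and> v \<in> V \<and> u \<noteq> v}"
    using inst by (auto simp: esp_instance_def Vst_def)
  have finVst: "finite Vst" using finV wV finite_subset by blast
  have set\<beta>: "set \<sigma>\<beta> \<subseteq> E" using approx(1) by (simp add: feasible_def esp_pattern_def)
  have seto: "set \<sigma>opt \<subseteq> E" using opt(1) by (simp add: feasible_def esp_pattern_def)
  have visV: "vis \<subseteq> V" using set\<beta> EV rV by (auto simp: vis_def visited_def)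
  have finvis: "finite vis" using visV finV finite_subset by blast
  have Vst_vis: "Vst \<subseteq> vis" using approx(1) by (simp add: feasible_def Vst_def vis_def)
  have Vst_viso: "Vst \<subseteq> visited r \<sigma>opt" using opt(1) by (simp add: feasible_def Vst_def)
  have Lb_nn: "v \<in> vis \<Longrightarrow> 0 \<le> Lb v" for v
    using latency_nonneg[OF set\<beta> lnn] by (simp add: Lb_def vis_def)
  have Lo_nn: "v \<in> Vst \<Longrightarrow> 0 \<le> Lo v" for v
    using latency_nonneg[OF seto lnn] Vst_viso by (auto simp: Lo_def)
  obtain Q :: nat where Q: "\<forall>b\<ge>0. \<forall>v\<in>vis. Lb v < t b (Q+1)"
  proof -
    define M where "M = Max (Lb ` vis)"
    obtain n :: nat where n: "M + a < real n * a" using reals_Archimedean3[OF apos] by blast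
    have "\<forall>b\<ge>0. \<forall>v\<in>vis. Lb v < t b (n+1)"
    proof (intro allI impI ballI)
      fix b :: real and v assume b: "0 \<le> b" and v: "v \<in> vis"
      have "Lb v \<le> M" unfolding M_def using finvis v by simp
      also have "\<dots> < (real (n+1) - 2) * a + b" using n b by (simp add: algebra_simps)
      also have "\<dots> < t b (n+1)" unfolding t_def' by (rule exp_gt_self)
      finally show "Lb v < t b (n+1)" .
    qed
    then show ?thesis using that by blast
  qed
  have qQ: "q b \<le> Q" if "0 \<le> b" for b
    unfolding q_def' by (rule Least_le) (use Q that in blast)
  have qI: "\<forall>v\<in>vis. Lb v < t b (q b + 1)" if "0 \<le> b" for b
    unfolding q_def' by (rule LeastI[of _ Q]) (use Q that in blast)
  have Vs_empty: "Vs b i = {}" if "0 \<le> b" "q b < i" for b i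
  proof -
    have "t b (q b + 1) \<le> t b i" using that by (intro tmono) auto
    then show ?thesis using qI[OF that(1)] by (force simp: Vs_def')
  qed
  have Vs_disj: "i = j" if "v \<in> Vs b i" "v \<in> Vs b j" for v b i j
  proof (rule ccontr)
    assume "i \<noteq> j"
    then consider "i < j" | "j < i" by linarith
    then show False
    proof cases
      case 1
      then have "t b (i+1) \<le> t b j" by (intro tmono) auto
      then show False using that by (auto simp: Vs_def')
    next
      case 2
      then have "t b (j+1) \<le> t b i" by (intro tmono) auto
      then show False using that by (auto simp: Vs_def')
    qed
  qed
  define m where "m S = Inf ((\<lambda>\<sigma>. \<Sum>v\<in>S\<inter>Vst. real (w v) * latency l r \<sigma> v) ` {\<sigma>. feasible E r (\<lambda>v. if v \<in> S then w v else 0) \<sigma>})" for S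
  define W where "W S = (\<Sum>v\<in>S\<inter>Vst. real (w v))" for S
  define g where "g b = (\<Sum>i\<in>{1..Q}. \<gamma> * t b i * W (Vs b i) + m (Vs b i))" for b
  have esp_w_eq: "esp_w l r w \<sigma>\<beta> \<epsilon> \<beta> b i = (\<lambda>v. if v \<in> Vs b i then w v else 0)" for b i
    by (auto simp: esp_w_def Vs_def)
  have C_eq0: "esp_C l r w \<sigma>\<beta> \<epsilon> \<beta> b i \<sigma> = (\<Sum>v\<in>Vs b i \<inter> Vst. real (w v) * (\<gamma> * t b i + latency l r \<sigma> v))" for b i \<sigma>
    by (simp add: esp_C_def Vs_def \<gamma>_def t_def Vst_def)
  have C_eq: "esp_C l r w \<sigma>\<beta> \<epsilon> \<beta> b i \<sigma> = \<gamma> * t b i * W (Vs b i) + (\<Sum>v\<in>Vs b i \<inter> Vst. real (w v) * latency l r \<sigma> v)" for b i \<sigma>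
    unfolding C_eq0 W_def by (simp add: distrib_left sum.distrib sum_distrib_left mult_ac)
  have m_empty: "m {} = 0"
    unfolding m_def
  proof (rule cInf_eq_minimum)
    have "feasible E r (\<lambda>v. if v \<in> {} then w v else 0) \<sigma>\<beta>" using approx(1) by (simp add: feasible_def)
    then show "0 \<in> (\<lambda>\<sigma>. \<Sum>v\<in>{}\<inter>Vst. real (w v) * latency l r \<sigma> v) ` {\<sigma>. feasible E r (\<lambda>v. if v \<in> {} then w v else 0) \<sigma>}"
      by force
  qed auto
  have mins: "feasible E r (\<lambda>v. if v \<in> Vs b i then w v else 0) (\<sigma>i b i)
      \<and> (\<forall>\<sigma>. feasible E r (\<lambda>v. if v \<in> Vs b i then w v else 0) \<sigma> \<longrightarrow>
             esp_C l r w \<sigma>\<beta> \<epsilon> \<beta> b i (\<sigma>i b i) \<le> esp_C l r w \<sigma>\<beta> \<epsilon> \<beta> b i \<sigma>)"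
    if "b \<in> {0..a}" "i \<in> {1..q b}" for b i
    using minimizers that unfolding a_def q_def esp_w_eq by blast
  have term_eq: "esp_C l r w \<sigma>\<beta> \<epsilon> \<beta> b i (\<sigma>i b i) = \<gamma> * t b i * W (Vs b i) + m (Vs b i)"
    if "b \<in> {0..a}" "i \<in> {1..q b}" for b i
  proof -
    have "m (Vs b i) = (\<Sum>v\<in>Vs b i \<inter> Vst. real (w v) * latency l r (\<sigma>i b i) v)"
      unfolding m_def
    proof (rule cInf_eq_minimum)
      show "(\<Sum>v\<in>Vs b i \<inter> Vst. real (w v) * latency l r (\<sigma>i b i) v) \<in> (\<lambda>\<sigma>. \<Sum>v\<in>Vs b i\<inter>Vst. real (w v) * latency l r \<sigma> v) ` {\<sigma>. feasible E r (\<lambda>v. if v \<in> Vs b i then w v else 0) \<sigma>}"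
        using mins[OF that] by blast
    next
      fix x assume "x \<in> (\<lambda>\<sigma>. \<Sum>v\<in>Vs b i\<inter>Vst. real (w v) * latency l r \<sigma> v) ` {\<sigma>. feasible E r (\<lambda>v. if v \<in> Vs b i then w v else 0) \<sigma>}"
      then obtain \<sigma> where "feasible E r (\<lambda>v. if v \<in> Vs b i then w v else 0) \<sigma>"
        and x: "x = (\<Sum>v\<in>Vs b i\<inter>Vst. real (w v) * latency l r \<sigma> v)" by blast
      then have "esp_C l r w \<sigma>\<beta> \<epsilon> \<beta> b i (\<sigma>i b i) \<le> esp_C l r w \<sigma>\<beta> \<epsilon> \<beta> b i \<sigma>"
        using mins[OF that] by blast
      then show "(\<Sum>v\<in>Vs b i \<inter> Vst. real (w v) * latency l r (\<sigma>i b i) v) \<le> x"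
        unfolding C_eq x by simp
    qed
    then show ?thesis unfolding C_eq by simp
  qed
  have f_eq_g: "f b = g b" if "b \<in> {0..a}" for b
  proof -
    have "f b = (\<Sum>i\<in>{1..q b}. \<gamma> * t b i * W (Vs b i) + m (Vs b i))"
      unfolding f_def using term_eq[OF that] by simp
    also have "\<dots> = g b" unfolding g_def
    proof (rule sum.mono_neutral_left)
      show "{1..q b} \<subseteq> {1..Q}" using qQ that by auto
      show "\<forall>i\<in>{1..Q} - {1..q b}. \<gamma> * t b i * W (Vs b i) + m (Vs b i) = 0"
        using Vs_empty that by (auto simp: W_def m_empty)
    qed auto
    finally show ?thesis .
  qed
  have Vs_meas: "(\<lambda>b. Vs b i) \<in> measurable borel (count_space (Pow vis))" for i
    unfolding measurable_count_space_eq2[OF finite_Pow_iff[THEN iffD2, OF finvis]]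
  proof (intro conjI ballI)
    show "(\<lambda>b. Vs b i) \<in> space borel \<rightarrow> Pow vis" by (auto simp: Vs_def')
  next
    fix S assume S: "S \<in> Pow vis"
    have "(\<lambda>b. Vs b i) -` {S} \<inter> space borel = {b::real. \<forall>v\<in>vis. (v\<in>S \<longleftrightarrow> exp((real i - 2)*a + b) \<le> Lb v \<and> Lb v < exp((real (i+1) - 2)*a + b))}"
      using S by (auto simp: Vs_def' t_def')
    also have "\<dots> \<in> sets borel" using finvis by measurable
    finally show "(\<lambda>b. Vs b i) -` {S} \<inter> space borel \<in> sets borel" .
  qed
  have mV_meas[measurable]: "(\<lambda>b. m (Vs b i)) \<in> borel_measurable borel" for i
    by (rule measurable_compose[OF Vs_meas]) (simp add: measurable_count_space_eq1)
  have WV_meas[measurable]: "(\<lambda>b. W (Vs b i)) \<in> borel_measurable borel" for i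
    by (rule measurable_compose[OF Vs_meas]) (simp add: measurable_count_space_eq1)
  have g_meas: "g \<in> borel_measurable borel"
    unfolding g_def t_def' by measurable
  have "g \<in> borel_measurable (lebesgue_on {0..a})"
    using g_meas by (simp add: measurable_completion measurable_restrict_space1)
  then have f_meas: "f \<in> borel_measurable (lebesgue_on {0..a})"
    using measurable_lebesgue_cong[of "{0..a}" f g] f_eq_g by blast
  define c where "c v = ln (Lb v) - a * of_int \<lfloor>ln (Lb v) / a\<rfloor>" for v
  define psi where "psi v b = Lb v * exp (b - c v - (if b \<le> c v then 0 else a))" for v b
  define U where "U b = (\<Sum>v\<in>Vst. real (w v) * (\<gamma> * psi v b + Lo v))" for b
  have c_bounds: "0 \<le> c v \<and> c v < a" for v
  proof -
    let ?x = "ln (Lb v) / a"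
    have h0: "of_int \<lfloor>?x\<rfloor> \<le> ?x" "?x < of_int \<lfloor>?x\<rfloor> + 1" by linarith+
    have h1: "a * of_int \<lfloor>?x\<rfloor> \<le> a * ?x" by (rule mult_left_mono) (use h0 apos in auto)
    have h2: "a * ?x < a * (of_int \<lfloor>?x\<rfloor> + 1)" by (rule mult_strict_left_mono) (use h0 apos in auto)
    have e: "a * ?x = ln (Lb v)" using apos by simp
    show ?thesis using h1 h2 unfolding e by (simp add: c_def algebra_simps)
  qed
  have psi_int: "(psi v has_integral Lb v * (1 - exp (-a))) {0..a}" for v
    unfolding psi_def[abs_def] using psi_integral[OF apos] c_bounds by blast
  have const_int: "((\<lambda>b. Lo v) has_integral Lo v * a) {0..a}" for v
    using has_integral_const_real[of "Lo v" 0 a] apos by (simp add: mult.commute)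
  define IU where "IU = (\<Sum>v\<in>Vst. real (w v) * (\<gamma> * (Lb v * (1 - exp (-a))) + Lo v * a))"
  have U_int: "(U has_integral IU) {0..a}"
    unfolding U_def[abs_def] IU_def
    by (intro has_integral_sum finVst ballI has_integral_mult_right has_integral_add const_int psi_int)
  have t_psi: "t b i \<le> psi v b" if b: "b \<in> {0..a}" and v: "v \<in> Vs b i" for b i v
  proof -
    have tL: "t b i \<le> Lb v" using v by (simp add: Vs_def')
    have Lpos: "0 < Lb v" using tL tpos[of b i] by linarith
    define x where "x = ln (Lb v)"
    define F where "F = \<lfloor>x / a\<rfloor>"
    have xF: "x = of_int F * a + c v" by (simp add: c_def x_def F_def)
    have kx: "(real i - 2) * a + b \<le> x"
      using tL Lpos unfolding t_def' x_def by (metis ln_exp ln_le_cancel_iff exp_gt_zero)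
    define K where "K = int i - 2 - F"
    have Kr: "of_int K = real i - 2 - of_int F" by (simp add: K_def)
    have Kra: "of_int K * a = (real i - 2) * a - of_int F * a" by (simp add: Kr left_diff_distrib)
    have Ka: "of_int K * a \<le> c v - b" using kx xF Kra by linarith
    have main: "(real i - 2) * a + b \<le> x + (b - c v - (if b \<le> c v then 0 else a))"
    proof (cases "b \<le> c v")
      case True
      have "c v - b < a" using c_bounds[of v] b by auto
      then have "of_int K * a < 1 * a" using Ka by linarith
      then have "of_int K < (1::real)" using apos by (meson mult_right_less_imp_less less_le)
      then have "K \<le> 0" by linarith
      then have "of_int K * a \<le> 0" using apos by (simp add: mult_nonpos_nonneg)
      then show ?thesis using True xF Kr by (simp add: algebra_simps)
    next
      case False
      have "of_int K * a < 0 * a" using Ka False by linarith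
      then have "of_int K < (0::real)" using apos by (meson mult_right_less_imp_less less_le)
      then have "K \<le> -1" by linarith
      then have "of_int K * a \<le> -1 * a" using apos by (intro mult_right_mono) auto
      then show ?thesis using False xF Kr by (simp add: algebra_simps)
    qed
    have "t b i = exp ((real i - 2) * a + b)" by (rule t_def')
    also have "\<dots> \<le> exp (x + (b - c v - (if b \<le> c v then 0 else a)))" using main by simp
    also have "\<dots> = psi v b" unfolding psi_def x_def using Lpos by (simp add: exp_add)
    finally show ?thesis .
  qed
  have psi_nn: "0 \<le> psi v b" if "v \<in> Vst" for v b
    using Lb_nn[of v] that Vst_vis by (auto simp: psi_def)
  have f_le_U: "f b \<le> U b" if b: "b \<in> {0..a}" for b
  proof -
    have "f b \<le> (\<Sum>i\<in>{1..q b}. esp_C l r w \<sigma>\<beta> \<epsilon> \<beta> b i \<sigma>opt)"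
      unfolding f_def
    proof (rule sum_mono)
      fix i assume i: "i \<in> {1..q b}"
      have "feasible E r (\<lambda>v. if v \<in> Vs b i then w v else 0) \<sigma>opt"
        using opt(1) by (auto simp: feasible_def)
      then show "esp_C l r w \<sigma>\<beta> \<epsilon> \<beta> b i (\<sigma>i b i) \<le> esp_C l r w \<sigma>\<beta> \<epsilon> \<beta> b i \<sigma>opt"
        using mins[OF b i] by blast
    qed
    also have "\<dots> = (\<Sum>i\<in>{1..q b}. \<Sum>v\<in>Vst. if v \<in> Vs b i then real (w v) * (\<gamma> * t b i + Lo v) else 0)"
      unfolding C_eq0 Lo_def by (simp add: Int_commute sum.inter_restrict[OF finVst])
    also have "\<dots> = (\<Sum>v\<in>Vst. \<Sum>i\<in>{1..q b}. if v \<in> Vs b i then real (w v) * (\<gamma> * t b i + Lo v) else 0)"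
      by (rule sum.swap)
    also have "\<dots> \<le> U b" unfolding U_def
    proof (rule sum_mono)
      fix v assume v: "v \<in> Vst"
      show "(\<Sum>i\<in>{1..q b}. if v \<in> Vs b i then real (w v) * (\<gamma> * t b i + Lo v) else 0) \<le> real (w v) * (\<gamma> * psi v b + Lo v)"
      proof (rule sum_single_bound)
        show "0 \<le> real (w v) * (\<gamma> * psi v b + Lo v)"
          using psi_nn[OF v] Lo_nn[OF v] \<gamma>pos by simp
        fix i assume "i \<in> {1..q b}" "v \<in> Vs b i"
        then show "real (w v) * (\<gamma> * t b i + Lo v) \<le> real (w v) * (\<gamma> * psi v b + Lo v)"
          using t_psi[OF b] \<gamma>pos by (simp add: mult_left_mono)
      qed (auto intro: Vs_disj)
    qed
    finally show ?thesis .
  qed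
  have f_nn: "0 \<le> f b" if b: "b \<in> {0..a}" for b
    unfolding f_def
  proof (intro sum_nonneg)
    fix i assume i: "i \<in> {1..q b}"
    have fe: "feasible E r (\<lambda>v. if v \<in> Vs b i then w v else 0) (\<sigma>i b i)" using mins[OF b i] by blast
    then have se: "set (\<sigma>i b i) \<subseteq> E" by (simp add: feasible_def esp_pattern_def)
    show "0 \<le> esp_C l r w \<sigma>\<beta> \<epsilon> \<beta> b i (\<sigma>i b i)"
      unfolding C_eq0
    proof (intro sum_nonneg)
      fix v assume v: "v \<in> Vs b i \<inter> Vst"
      then have "v \<in> visited r (\<sigma>i b i)" using fe by (auto simp: feasible_def Vst_def)
      then have "0 \<le> latency l r (\<sigma>i b i) v" by (rule latency_nonneg[OF se lnn])
      then show "0 \<le> real (w v) * (\<gamma> * t b i + latency l r (\<sigma>i b i) v)"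
        using tpos[of b i] \<gamma>pos by simp
    qed
  qed
  have f_int: "f integrable_on {0..a}"
  proof (rule measurable_bounded_by_integrable_imp_integrable[OF f_meas])
    show "U integrable_on {0..a}" using U_int by blast
    show "norm (f b) \<le> U b" if "b \<in> {0..a}" for b using f_nn[OF that] f_le_U[OF that] by simp
  qed simp
  have "integral {0..a} f \<le> integral {0..a} U"
    using f_int U_int f_le_U by (intro integral_le) auto
  also have "\<dots> = IU" using U_int by (rule integral_unique)
  also have "IU \<le> \<gamma> * total_latency l r w \<sigma>\<beta> + a * total_latency l r w \<sigma>opt"
  proof -
    have "IU \<le> (\<Sum>v\<in>Vst. \<gamma> * (real (w v) * Lb v) + a * (real (w v) * Lo v))"
      unfolding IU_def
    proof (rule sum_mono)
      fix v assume v: "v \<in> Vst"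
      have L0: "0 \<le> Lb v" using Lb_nn[of v] v Vst_vis by auto
      have "Lb v * (1 - exp (-a)) \<le> Lb v * 1" by (rule mult_left_mono) (use L0 in auto)
      then have "\<gamma> * (Lb v * (1 - exp (-a))) \<le> \<gamma> * Lb v" using \<gamma>pos by simp
      then show "real (w v) * (\<gamma> * (Lb v * (1 - exp (-a))) + Lo v * a) \<le> \<gamma> * (real (w v) * Lb v) + a * (real (w v) * Lo v)"
      proof -
        have h: "real (w v) * (\<gamma> * (Lb v * (1 - exp (-a)))) \<le> real (w v) * (\<gamma> * Lb v)"
          by (rule mult_left_mono) (use \<open>\<gamma> * (Lb v * (1 - exp (-a))) \<le> \<gamma> * Lb v\<close> in auto)
        have e1: "real (w v) * (\<gamma> * (Lb v * (1 - exp (-a))) + Lo v * a) = real (w v) * (\<gamma> * (Lb v * (1 - exp (-a)))) + a * (real (w v) * Lo v)"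
          by (simp add: algebra_simps)
        have e2: "real (w v) * (\<gamma> * Lb v) = \<gamma> * (real (w v) * Lb v)" by simp
        show ?thesis unfolding e1 using h e2 by linarith
      qed
    qed
    also have "\<dots> = \<gamma> * total_latency l r w \<sigma>\<beta> + a * total_latency l r w \<sigma>opt"
      by (simp add: total_latency_def sum.distrib sum_distrib_left Vst_def Lb_def Lo_def)
    finally show ?thesis .
  qed
  also have "\<dots> \<le> \<gamma> * (\<beta> * total_latency l r w \<sigma>opt) + a * total_latency l r w \<sigma>opt"
    using approx(2) \<gamma>pos by simp
  finally have I: "integral {0..a} f \<le> (\<gamma> * \<beta> + a) * total_latency l r w \<sigma>opt"
    by (simp add: algebra_simps)
  have ga: "\<gamma> * \<beta> = \<epsilon> * a" using eps by (simp add: a_def esp_a_def \<gamma>_def[symmetric])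
  have "integral {0..a} f / a \<le> (\<epsilon> * a + a) * total_latency l r w \<sigma>opt / a"
    using I ga apos by (simp add: divide_right_mono)
  also have "\<dots> = (1 + \<epsilon>) * total_latency l r w \<sigma>opt" using apos by (simp add: field_simps)
  finally have "integral {0..a} f / a \<le> (1 + \<epsilon>) * total_latency l r w \<sigma>opt" .
  with f_int show ?thesis unfolding f_def a_def q_def by simp
qed

end
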